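(* Let $E$ be a finite set and $V \subset \mathbb R^E$ a linear subspace defining an oriented matroid $M$. If $F \subset E$ is an acyclic flat of $M$, then \[ Y_V \cap (\mathbb R_{\geq 0}^F \times \infty^{E \setminus F}) = \mathcal Y_V \cap (\mathbb R_{\geq 0}^F \times \infty^{E \setminus F}). \]
   Context: $\mathbb P^1_{\mathbb R} = \mathbb R \cup\{\infty\}$. $Y_V$ is the Zariski closure of $V$ in $(\mathbb P^1_{\mathbb R})^E$, and $\mathcal Y_V$ is the closure of $V \cap \mathbb R_{\geq 0}^E$ in $(\mathbb P^1_{\mathbb R})^E$ in the analytic topology. $\mathbb R_{\geq 0}^F \times \infty^{E\setminus F}$ is the set of points with nonnegative real coordinates on $F$ and $\infty$ on $E\setminus F$. Flats of $M$ are the zero sets $\{i : v_i = 0\}$ of $v \in V$; a flat $F$ is acyclic if some $v\in V$ has $v_i=0$ for $i\in F$ and $v_i>0$ for $i\notin F$. *)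

theory Defs
  imports "HOL-Analysis.Analysis"
begin

datatype P1 = Fin real | Inf

definition P1_topology :: "P1 topology" where
  "P1_topology = topology (\<lambda>U. open (Fin -` U) \<and>
      (Inf \<in> U \<longrightarrow> (\<exists>M::real. \<forall>x. M < \<bar>x\<bar> \<longrightarrow> Fin x \<in> U)))"

definition P1E_topology :: "('e \<Rightarrow> P1) topology" where
  "P1E_topology = product_topology (\<lambda>_. P1_topology) UNIV"

fun hcoord :: "P1 \<Rightarrow> real \<times> real" where
  "hcoord (Fin t) = (t, 1)"
| "hcoord Inf = (1, 0)"

text \<open>A polynomial in the variables x_i, y_i (i \<in> E) is a finitely supported coefficient
  function on exponent pairs (a,b), standing for the monomial prod_i x_i^(a i) y_i^(b i).\<close>
definition poly_eval :: "(('e::finite \<Rightarrow> nat) \<times> ('e \<Rightarrow> nat) \<Rightarrow> real) \<Rightarrow> ('e \<Rightarrow> P1) \<Rightarrow> real" where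
  "poly_eval c p = (\<Sum>m\<in>{m. c m \<noteq> 0}. c m *
      (\<Prod>i\<in>UNIV. fst (hcoord (p i)) ^ fst m i * snd (hcoord (p i)) ^ snd m i))"

definition multihomogeneous :: "(('e \<Rightarrow> nat) \<times> ('e \<Rightarrow> nat) \<Rightarrow> real) \<Rightarrow> bool" where
  "multihomogeneous c \<longleftrightarrow> finite {m. c m \<noteq> 0} \<and>
      (\<exists>d::'e \<Rightarrow> nat. \<forall>m. c m \<noteq> 0 \<longrightarrow> (\<forall>i. fst m i + snd m i = d i))"

text \<open>Zariski closure in (P^1_R)^E: closed sets are common zero sets of multihomogeneous
  polynomials, so the closure of S is the common zero set of all multihomogeneous
  polynomials vanishing on S.\<close>
definition zariski_closure :: "('e::finite \<Rightarrow> P1) set \<Rightarrow> ('e \<Rightarrow> P1) set" where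
  "zariski_closure S = {p. \<forall>c. multihomogeneous c \<and> (\<forall>q\<in>S. poly_eval c q = 0)
                                 \<longrightarrow> poly_eval c p = 0}"

definition embP :: "real ^ 'e \<Rightarrow> ('e::finite \<Rightarrow> P1)" where
  "embP v = (\<lambda>i. Fin (v $ i))"

definition Y_V :: "(real ^ 'e) set \<Rightarrow> ('e::finite \<Rightarrow> P1) set" where
  "Y_V V = zariski_closure (embP ` V)"

definition calY_V :: "(real ^ 'e) set \<Rightarrow> ('e::finite \<Rightarrow> P1) set" where
  "calY_V V = P1E_topology closure_of (embP ` (V \<inter> {v. \<forall>i. 0 \<le> v $ i}))"

definition nonneg_inf_box :: "'e set \<Rightarrow> ('e \<Rightarrow> P1) set" where
  "nonneg_inf_box F = {p. (\<forall>i\<in>F. \<exists>t\<ge>0. p i = Fin t) \<and> (\<forall>i. i \<notin> F \<longrightarrow> p i = Inf)}"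

definition is_flat :: "(real ^ 'e) set \<Rightarrow> 'e set \<Rightarrow> bool" where
  "is_flat V F \<longleftrightarrow> (\<exists>v\<in>V. F = {i. v $ i = 0})"

definition is_acyclic_flat :: "(real ^ 'e) set \<Rightarrow> 'e set \<Rightarrow> bool" where
  "is_acyclic_flat V F \<longleftrightarrow> is_flat V F \<and>
     (\<exists>v\<in>V. (\<forall>i\<in>F. v $ i = 0) \<and> (\<forall>i. i \<notin> F \<longrightarrow> 0 < v $ i))"

end

theory Submission imports Defs "HOL-Real_Asymp.Real_Asymp" begin


lemma istop_P1: "istopology (\<lambda>U. open (Fin -` U) \<and>
      (Inf \<in> U \<longrightarrow> (\<exists>M::real. \<forall>x. M < \<bar>x\<bar> \<longrightarrow> Fin x \<in> U)))"
  unfolding istopology_def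
  apply (intro conjI allI impI ballI)
  subgoal by (simp add: vimage_Int open_Int)
  subgoal for S T
  proof -
    assume S: "open (Fin -` S) \<and> (Inf \<in> S \<longrightarrow> (\<exists>M::real. \<forall>x. M < \<bar>x\<bar> \<longrightarrow> Fin x \<in> S))"
      and T: "open (Fin -` T) \<and> (Inf \<in> T \<longrightarrow> (\<exists>M::real. \<forall>x. M < \<bar>x\<bar> \<longrightarrow> Fin x \<in> T))"
      and "Inf \<in> S \<inter> T"
    then obtain M1 M2 where "\<forall>x. M1 < \<bar>x\<bar> \<longrightarrow> Fin x \<in> S" "\<forall>x. M2 < \<bar>x\<bar> \<longrightarrow> Fin x \<in> T"
      by auto
    then show "\<exists>M::real. \<forall>x. M < \<bar>x\<bar> \<longrightarrow> Fin x \<in> S \<inter> T"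
      by (intro exI[of _ "max M1 M2"]) auto
  qed
  subgoal for K
  proof -
    assume "\<forall>S\<in>K. open (Fin -` S) \<and> (Inf \<in> S \<longrightarrow> (\<exists>M::real. \<forall>x. M < \<bar>x\<bar> \<longrightarrow> Fin x \<in> S))"
    moreover have "Fin -` \<Union>K = (\<Union>S\<in>K. Fin -` S)" by auto
    ultimately show ?thesis by auto
  qed
  subgoal by blast
  done

lemma openin_P1: "openin P1_topology U \<longleftrightarrow> open (Fin -` U) \<and>
      (Inf \<in> U \<longrightarrow> (\<exists>M::real. \<forall>x. M < \<bar>x\<bar> \<longrightarrow> Fin x \<in> U))"
  unfolding P1_topology_def using istop_P1 by simp

lemma topspace_P1 [simp]: "topspace P1_topology = UNIV"
proof -
  have "openin P1_topology UNIV" unfolding openin_P1 by auto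
  then show ?thesis using openin_subset by blast
qed

lemma topspace_P1E [simp]: "topspace P1E_topology = UNIV"
  unfolding P1E_topology_def by (auto simp: PiE_def extensional_def)

lemma cont_P1:
  assumes c: "continuous_on UNIV (\<lambda>s. f (Fin s))"
    and t: "((\<lambda>s. f (Fin s)) \<longlongrightarrow> f Inf) at_top"
    and b: "((\<lambda>s. f (Fin s)) \<longlongrightarrow> f Inf) at_bot"
  shows "continuous_map P1_topology euclideanreal f"
  unfolding continuous_map_def
proof (intro conjI allI impI)
  show "f \<in> topspace P1_topology \<rightarrow> topspace euclideanreal" by simp
  fix U :: "real set" assume "openin euclideanreal U"
  then have U: "open U" by simp
  show "openin P1_topology {x \<in> topspace P1_topology. f x \<in> U}"
    unfolding openin_P1
  proof
    have "Fin -` {x \<in> topspace P1_topology. f x \<in> U} = (\<lambda>s. f (Fin s)) -` U" by auto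
    then show "open (Fin -` {x \<in> topspace P1_topology. f x \<in> U})"
      using c U by (simp add: open_vimage)
    show "Inf \<in> {x \<in> topspace P1_topology. f x \<in> U} \<longrightarrow>
      (\<exists>M. \<forall>x. M < \<bar>x\<bar> \<longrightarrow> Fin x \<in> {x \<in> topspace P1_topology. f x \<in> U})"
    proof
      assume "Inf \<in> {x \<in> topspace P1_topology. f x \<in> U}"
      then have "f Inf \<in> U" by simp
      have e1: "eventually (\<lambda>s. f (Fin s) \<in> U) at_top" using t U \<open>f Inf \<in> U\<close> topological_tendstoD by blast
      have e2: "eventually (\<lambda>s. f (Fin s) \<in> U) at_bot" using b U \<open>f Inf \<in> U\<close> topological_tendstoD by blast
      obtain N1 where N1: "\<And>s. s \<ge> N1 \<Longrightarrow> f (Fin s) \<in> U" using e1 by (auto simp: eventually_at_top_linorder)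
      obtain N2 where N2: "\<And>s. s \<le> N2 \<Longrightarrow> f (Fin s) \<in> U" using e2 by (auto simp: eventually_at_bot_linorder)
      show "\<exists>M. \<forall>x. M < \<bar>x\<bar> \<longrightarrow> Fin x \<in> {x \<in> topspace P1_topology. f x \<in> U}"
      proof (intro exI[of _ "max \<bar>N1\<bar> \<bar>N2\<bar>"] allI impI)
        fix x :: real assume "max \<bar>N1\<bar> \<bar>N2\<bar> < \<bar>x\<bar>"
        then have "x \<ge> N1 \<or> x \<le> N2" by linarith
        then show "Fin x \<in> {x \<in> topspace P1_topology. f x \<in> U}" using N1 N2 by auto
      qed
    qed
  qed
qed


definition phiA :: "bool \<Rightarrow> P1 \<Rightarrow> real" where
  "phiA b q = (case q of Fin s \<Rightarrow> (if b then s^2/(1+s^2) else s/(1+s^2)) | P1.Inf \<Rightarrow> (if b then 1 else 0))"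
definition phiB :: "bool \<Rightarrow> P1 \<Rightarrow> real" where
  "phiB b q = (case q of Fin s \<Rightarrow> (if b then s/(1+s^2) else 1/(1+s^2)) | P1.Inf \<Rightarrow> 0)"
definition lam :: "bool \<Rightarrow> P1 \<Rightarrow> real" where
  "lam b q = (case q of Fin s \<Rightarrow> (if b then (1+s^2)/s else 1+s^2) | P1.Inf \<Rightarrow> 1)"
definition Uc :: "bool \<Rightarrow> P1 set" where
  "Uc b = (if b then - {Fin 0} else range Fin)"

lemma pos1: "(1::real) + s^2 \<noteq> 0"
  by (metis add_pos_nonneg less_numeral_extra(1) zero_le_power2 less_irrefl)

lemma cont_phiA: "continuous_map P1_topology euclideanreal (phiA b)"
proof (rule cont_P1)
  show "continuous_on UNIV (\<lambda>s. phiA b (Fin s))"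
    unfolding phiA_def using pos1 by (cases b) (auto intro!: continuous_intros)
  show "((\<lambda>s. phiA b (Fin s)) \<longlongrightarrow> phiA b P1.Inf) at_top"
    unfolding phiA_def by (cases b) (simp_all, real_asymp+)
  show "((\<lambda>s. phiA b (Fin s)) \<longlongrightarrow> phiA b P1.Inf) at_bot"
    unfolding phiA_def by (cases b) (simp_all, real_asymp+)
qed

lemma cont_phiB: "continuous_map P1_topology euclideanreal (phiB b)"
proof (rule cont_P1)
  show "continuous_on UNIV (\<lambda>s. phiB b (Fin s))"
    unfolding phiB_def using pos1 by (cases b) (auto intro!: continuous_intros)
  show "((\<lambda>s. phiB b (Fin s)) \<longlongrightarrow> phiB b P1.Inf) at_top"
    unfolding phiB_def by (cases b) (simp_all, real_asymp+)
  show "((\<lambda>s. phiB b (Fin s)) \<longlongrightarrow> phiB b P1.Inf) at_bot"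
    unfolding phiB_def by (cases b) (simp_all, real_asymp+)
qed

lemma t1: "(s::real) \<noteq> 0 \<Longrightarrow> (1+s^2)/s * (s^2/(1+s^2)) = s"
  using pos1[of s] by (simp add: power2_eq_square)
lemma t2: "(s::real) \<noteq> 0 \<Longrightarrow> (1+s^2)/s * (s/(1+s^2)) = 1"
  using pos1[of s] by simp
lemma t3: "(1+s^2) * ((s::real)/(1+s^2)) = s"
  using pos1[of s] by simp
lemma t4: "(1+s^2) * (1/(1+s^2)) = (1::real)"
  using pos1[of s] by simp

lemma chart:
  assumes "q \<in> Uc b"
  shows "lam b q \<noteq> 0 \<and> fst (hcoord q) = lam b q * phiA b q \<and> snd (hcoord q) = lam b q * phiB b q"
proof (cases q)
  case (Fin s)
  have p: "1 + s^2 \<noteq> 0" by (rule pos1)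
  show ?thesis
  proof (cases b)
    case True
    then have s0: "s \<noteq> 0" using assms Fin by (auto simp: Uc_def)
    have "lam b q = (1+s^2)/s" "phiA b q = s^2/(1+s^2)" "phiB b q = s/(1+s^2)" "hcoord q = (s, 1)"
      using True Fin by (simp_all add: lam_def phiA_def phiB_def)
    then show ?thesis using t1[OF s0] t2[OF s0] s0 p by simp
  next
    case False
    have "lam b q = 1+s^2" "phiA b q = s/(1+s^2)" "phiB b q = 1/(1+s^2)" "hcoord q = (s, 1)"
      using False Fin by (simp_all add: lam_def phiA_def phiB_def)
    then show ?thesis using t3[of s] t4[of s] p by simp
  qed
next
  case Inf
  then have "b" using assms by (cases b) (auto simp: Uc_def)
  then show ?thesis using Inf by (simp add: lam_def phiA_def phiB_def)
qed

lemma open_Uc: "openin P1_topology (Uc b)"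
proof (cases b)
  case True
  have e: "Fin -` (- {Fin 0}) = - {0}" by auto
  have o: "open (- {0::real})" by (simp add: open_Compl)
  have m: "\<forall>x::real. 0 < \<bar>x\<bar> \<longrightarrow> Fin x \<in> - {Fin 0}" by simp
  have "openin P1_topology (- {Fin 0})"
    unfolding openin_P1 using e o m by metis
  then show ?thesis using True unfolding Uc_def by simp
next
  case False
  have e: "Fin -` range Fin = UNIV" by auto
  have "openin P1_topology (range Fin)"
    unfolding openin_P1 using e by simp
  then show ?thesis using False unfolding Uc_def by simp
qed

lemma in_Uc: "p \<in> Uc (p = P1.Inf)"
  by (cases p) (auto simp: Uc_def)


lemma zero_closed:
  fixes c :: "('e::finite \<Rightarrow> nat) \<times> ('e \<Rightarrow> nat) \<Rightarrow> real"
  assumes mh: "multihomogeneous c" and p: "p \<in> P1E_topology closure_of S"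
    and z: "\<forall>q\<in>S. poly_eval c q = 0"
  shows "poly_eval c p = 0"
proof (rule ccontr)
  assume ne: "poly_eval c p \<noteq> 0"
  obtain d where d: "\<And>m i. c m \<noteq> 0 \<Longrightarrow> fst m i + snd m i = d i" and fin: "finite {m. c m \<noteq> 0}"
    using mh unfolding multihomogeneous_def by blast
  define b where "b j = (p j = P1.Inf)" for j
  define H where "H q = (\<Sum>m\<in>{m. c m \<noteq> 0}. c m * (\<Prod>i\<in>UNIV. phiA (b i) (q i) ^ fst m i * phiB (b i) (q i) ^ snd m i))" for q :: "'e \<Rightarrow> P1"
  have fac: "poly_eval c q = (\<Prod>i\<in>UNIV. lam (b i) (q i) ^ d i) * H q" if q: "\<forall>i. q i \<in> Uc (b i)" for q
    unfolding poly_eval_def H_def sum_distrib_left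
  proof (rule sum.cong[OF refl])
    fix m assume "m \<in> {m. c m \<noteq> 0}"
    then have dm: "\<And>i. fst m i + snd m i = d i" using d by auto
    have "\<And>i. fst (hcoord (q i)) ^ fst m i * snd (hcoord (q i)) ^ snd m i =
        lam (b i) (q i) ^ d i * (phiA (b i) (q i) ^ fst m i * phiB (b i) (q i) ^ snd m i)"
    proof -
      fix i
      from chart[OF q[rule_format, of i]] have
        "fst (hcoord (q i)) = lam (b i) (q i) * phiA (b i) (q i)"
        "snd (hcoord (q i)) = lam (b i) (q i) * phiB (b i) (q i)" by auto
      then show "fst (hcoord (q i)) ^ fst m i * snd (hcoord (q i)) ^ snd m i =
        lam (b i) (q i) ^ d i * (phiA (b i) (q i) ^ fst m i * phiB (b i) (q i) ^ snd m i)"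
        by (simp add: power_mult_distrib dm[symmetric] power_add algebra_simps)
    qed
    then show "c m * (\<Prod>i\<in>UNIV. fst (hcoord (q i)) ^ fst m i * snd (hcoord (q i)) ^ snd m i) =
      (\<Prod>i\<in>UNIV. lam (b i) (q i) ^ d i) *
      (c m * (\<Prod>i\<in>UNIV. phiA (b i) (q i) ^ fst m i * phiB (b i) (q i) ^ snd m i))"
      by (simp add: prod.distrib algebra_simps)
  qed
  have lamnz: "(\<Prod>i\<in>UNIV. lam (b i) (q i) ^ d i) \<noteq> 0" if q: "\<forall>i. q i \<in> Uc (b i)" for q
    using chart q by (simp add: prod_zero_iff)
  have cA: "continuous_map P1E_topology euclideanreal (\<lambda>q. phiA (b i) (q i))" for i
    unfolding P1E_topology_def
    using continuous_map_compose[OF continuous_map_product_projection[of i UNIV "\<lambda>_. P1_topology"] cont_phiA[of "b i"]]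
    by (simp add: o_def)
  have cB: "continuous_map P1E_topology euclideanreal (\<lambda>q. phiB (b i) (q i))" for i
    unfolding P1E_topology_def
    using continuous_map_compose[OF continuous_map_product_projection[of i UNIV "\<lambda>_. P1_topology"] cont_phiB[of "b i"]]
    by (simp add: o_def)
  have Hc: "continuous_map P1E_topology euclideanreal H"
    unfolding H_def
    by (intro continuous_map_sum continuous_map_real_mult continuous_map_prod continuous_map_real_pow
        continuous_map_canonical_const cA cB fin) auto
  define W where "W = (\<Pi>\<^sub>E i\<in>UNIV. Uc (b i)) \<inter> {q \<in> topspace P1E_topology. H q \<in> - {0}}"
  have oW: "openin P1E_topology W"
    unfolding W_def
  proof (rule openin_Int)
    show "openin P1E_topology (\<Pi>\<^sub>E i\<in>UNIV. Uc (b i))"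
      unfolding P1E_topology_def by (rule product_topology_basis) (auto simp: open_Uc)
    show "openin P1E_topology {q \<in> topspace P1E_topology. H q \<in> - {0}}"
      by (rule openin_continuous_map_preimage[OF Hc]) auto
  qed
  have pU: "\<forall>i. p i \<in> Uc (b i)" unfolding b_def using in_Uc by auto
  have "p \<in> W" unfolding W_def using pU fac[OF pU] ne by auto
  then obtain y where y: "y \<in> S" "y \<in> W" using p oW unfolding in_closure_of by blast
  then have yU: "\<forall>i. y i \<in> Uc (b i)" and "H y \<noteq> 0" unfolding W_def by auto
  then have "poly_eval c y \<noteq> 0" using fac[OF yU] lamnz[OF yU] by simp
  then show False using z y by auto
qed



definition monoF :: "'e set \<Rightarrow> 'e \<Rightarrow> ('e \<Rightarrow> nat) \<times> ('e \<Rightarrow> nat)" where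
  "monoF F i = ((\<lambda>j. if j = i then 1 else 0), (\<lambda>j. if j \<in> F \<and> j \<noteq> i then 1 else 0))"

definition linpoly :: "'e set \<Rightarrow> ('e \<Rightarrow> real) \<Rightarrow> ('e \<Rightarrow> nat) \<times> ('e \<Rightarrow> nat) \<Rightarrow> real" where
  "linpoly F a m = (\<Sum>k\<in>F. if m = monoF F k then a k else 0)"

lemma monoF_inj: "monoF F i = monoF F k \<longleftrightarrow> i = k"
proof
  assume "monoF F i = monoF F k"
  then have "fst (monoF F i) i = fst (monoF F k) i" by simp
  then show "i = k" unfolding monoF_def by (auto split: if_splits)
qed simp

lemma linpoly_supp:
  fixes F :: "'e::finite set"
  shows "{m. linpoly F a m \<noteq> 0} \<subseteq> monoF F ` F"
proof
  fix m assume m: "m \<in> {m. linpoly F a m \<noteq> 0}"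
  show "m \<in> monoF F ` F"
  proof (rule ccontr)
    assume "m \<notin> monoF F ` F"
    then have "\<forall>k\<in>F. (if m = monoF F k then a k else 0) = 0" by auto
    then have "linpoly F a m = 0" unfolding linpoly_def by simp
    then show False using m by simp
  qed
qed

lemma linpoly_val:
  fixes F :: "'e::finite set"
  assumes "i \<in> F" shows "linpoly F a (monoF F i) = a i"
proof -
  have "linpoly F a (monoF F i) = (\<Sum>k\<in>F. if i = k then a k else 0)"
    unfolding linpoly_def by (simp add: monoF_inj)
  also have "\<dots> = a i" using assms by simp
  finally show ?thesis .
qed

lemma linpoly_mh:
  fixes F :: "'e::finite set"
  shows "multihomogeneous (linpoly F a)"
  unfolding multihomogeneous_def
proof
  show "finite {m. linpoly F a m \<noteq> 0}"
    by (rule finite_subset[OF linpoly_supp]) simp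
  show "\<exists>d. \<forall>m. linpoly F a m \<noteq> 0 \<longrightarrow> (\<forall>i. fst m i + snd m i = d i)"
  proof (intro exI[of _ "\<lambda>j. if j \<in> F then 1 else 0"] allI impI)
    fix m i assume "linpoly F a m \<noteq> 0"
    then obtain k where "k \<in> F" "m = monoF F k" using linpoly_supp by blast
    then show "fst m i + snd m i = (if i \<in> F then 1 else 0)" by (auto simp: monoF_def)
  qed
qed

lemma linpoly_eval:
  fixes F :: "'e::finite set"
  assumes q: "\<forall>j\<in>F. q j = Fin (g j)"
  shows "poly_eval (linpoly F a) q = (\<Sum>i\<in>F. a i * g i)"
proof -
  define Mon where "Mon m = (\<Prod>i\<in>UNIV. fst (hcoord (q i)) ^ fst m i * snd (hcoord (q i)) ^ snd m i)" for m :: "('e \<Rightarrow> nat) \<times> ('e \<Rightarrow> nat)"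
  have mon: "Mon (monoF F i) = g i" if i: "i \<in> F" for i
  proof -
    have "Mon (monoF F i) = (\<Prod>j\<in>UNIV. if j = i then g i else 1)"
      unfolding Mon_def
    proof (rule prod.cong[OF refl])
      fix j :: 'e
      show "fst (hcoord (q j)) ^ fst (monoF F i) j * snd (hcoord (q j)) ^ snd (monoF F i) j =
        (if j = i then g i else 1)"
        using q i by (cases "j = i"; cases "j \<in> F") (auto simp: monoF_def)
    qed
    also have "\<dots> = g i" by simp
    finally show ?thesis .
  qed
  have "poly_eval (linpoly F a) q = (\<Sum>m\<in>{m. linpoly F a m \<noteq> 0}. linpoly F a m * Mon m)"
    unfolding poly_eval_def Mon_def ..
  also have "\<dots> = (\<Sum>m\<in>monoF F ` F. linpoly F a m * Mon m)"
    by (rule sum.mono_neutral_left) (use linpoly_supp in auto)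
  also have "\<dots> = (\<Sum>i\<in>F. linpoly F a (monoF F i) * Mon (monoF F i))"
    by (rule sum.reindex_cong[of "monoF F"]) (auto simp: inj_on_def monoF_inj)
  also have "\<dots> = (\<Sum>i\<in>F. a i * g i)"
    by (rule sum.cong[OF refl]) (simp add: linpoly_val mon)
  finally show ?thesis .
qed



lemma eventually_gt_lin:
  assumes r: "(r::real) > 0"
  shows "eventually (\<lambda>n. a + real n * r > M) sequentially"
proof -
  obtain N :: nat where N: "(M - a) / r < real N" using reals_Archimedean2 by blast
  show ?thesis unfolding eventually_sequentially
  proof (intro exI[of _ N] allI impI)
    fix n assume "N \<le> n"
    then have "real N * r \<le> real n * r" using r by simp
    moreover have "M - a < real N * r" using N r by (simp add: field_simps)
    ultimately show "a + real n * r > M" by linarith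
  qed
qed

lemma proj_exists:
  fixes V :: "(real ^ 'e::finite) set" and F :: "'e set"
  assumes V: "subspace V" and pY: "p \<in> Y_V V"
    and pF: "\<forall>i\<in>F. p i = Fin (u i)"
  shows "\<exists>v\<in>V. \<forall>i\<in>F. v $ i = u i"
proof (rule ccontr)
  assume nex: "\<not> (\<exists>v\<in>V. \<forall>i\<in>F. v $ i = u i)"
  define pr :: "real ^ 'e \<Rightarrow> real ^ 'e" where "pr x = (\<chi> i. if i \<in> F then x $ i else 0)" for x
  define u' :: "real ^ 'e" where "u' = (\<chi> i. if i \<in> F then u i else 0)"
  have lin: "linear pr"
    by (rule linearI) (auto simp: pr_def vec_eq_iff)
  define W where "W = pr ` V"
  have sW: "subspace W" unfolding W_def using linear_subspace_image[OF lin V] .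
  have "u' \<notin> W"
  proof
    assume "u' \<in> W"
    then obtain v where "v \<in> V" "u' = pr v" unfolding W_def by blast
    then have "\<forall>i\<in>F. v $ i = u i" unfolding u'_def pr_def by (auto simp: vec_eq_iff) metis
    then show False using nex \<open>v \<in> V\<close> by blast
  qed
  obtain y z where y: "y \<in> span W" and z: "\<And>w. w \<in> span W \<Longrightarrow> orthogonal z w" and uyz: "u' = y + z"
    using orthogonal_subspace_decomp_exists[of W u'] by blast
  have spW: "span W = W" using sW by (simp add: span_eq_iff)
  have "z \<noteq> 0" using uyz y spW \<open>u' \<notin> W\<close> by auto
  have "z \<bullet> u' = z \<bullet> z" using z[OF y] uyz by (simp add: orthogonal_def inner_add_right)
  then have zu: "z \<bullet> u' \<noteq> 0" using \<open>z \<noteq> 0\<close> by simp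
  have inner_pr: "z \<bullet> pr x = (\<Sum>i\<in>F. z $ i * x $ i)" for x
  proof -
    have "z \<bullet> pr x = (\<Sum>i\<in>UNIV. z $ i * (if i \<in> F then x $ i else 0))"
      unfolding inner_vec_def pr_def by simp
    also have "\<dots> = (\<Sum>i\<in>F. z $ i * x $ i)"
      by (simp add: if_distrib sum.If_cases)
    finally show ?thesis .
  qed
  define c where "c = linpoly F (\<lambda>i. z $ i)"
  have mh: "multihomogeneous c" unfolding c_def by (rule linpoly_mh)
  have van: "\<forall>q\<in>embP ` V. poly_eval c q = 0"
  proof
    fix q assume "q \<in> embP ` V"
    then obtain v where v: "v \<in> V" "q = embP v" by blast
    have "poly_eval c q = (\<Sum>i\<in>F. z $ i * v $ i)"
      unfolding c_def by (rule linpoly_eval) (simp add: v embP_def)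
    also have "\<dots> = z \<bullet> pr v" by (simp add: inner_pr)
    also have "\<dots> = 0" using z v(1) spW unfolding W_def by (simp add: orthogonal_def)
    finally show "poly_eval c q = 0" .
  qed
  have "poly_eval c p = 0" using pY mh van unfolding Y_V_def zariski_closure_def by blast
  moreover have "poly_eval c p = (\<Sum>i\<in>F. z $ i * u i)"
    unfolding c_def by (rule linpoly_eval) (simp add: pF)
  moreover have "z \<bullet> u' = (\<Sum>i\<in>F. z $ i * u i)"
  proof -
    have "z \<bullet> u' = (\<Sum>i\<in>UNIV. z $ i * (if i \<in> F then u i else 0))"
      unfolding inner_vec_def u'_def by simp
    also have "\<dots> = (\<Sum>i\<in>F. z $ i * u i)"
      by (simp add: if_distrib sum.If_cases)
    finally show ?thesis .
  qed
  ultimately show False using zu by simp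
qed



theorem lemma3p3:
  fixes V :: "(real ^ 'e::finite) set" and F :: "'e set"
  assumes "subspace V"
    and "is_acyclic_flat V F"
  shows "Y_V V \<inter> nonneg_inf_box F = calY_V V \<inter> nonneg_inf_box F"
proof (intro equalityI subsetI)
  fix p assume "p \<in> calY_V V \<inter> nonneg_inf_box F"
  then have pc: "p \<in> P1E_topology closure_of (embP ` (V \<inter> {v. \<forall>i. 0 \<le> v $ i}))" and pb: "p \<in> nonneg_inf_box F"
    unfolding calY_V_def by auto
  have "p \<in> Y_V V"
    unfolding Y_V_def zariski_closure_def
  proof (intro CollectI allI impI)
    fix c :: "('e \<Rightarrow> nat) \<times> ('e \<Rightarrow> nat) \<Rightarrow> real"
    assume a: "multihomogeneous c \<and> (\<forall>q\<in>embP ` V. poly_eval c q = 0)"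
    then have mh: "multihomogeneous c" by (rule conjunct1)
    have van: "\<forall>q\<in>embP ` (V \<inter> {v. \<forall>i. 0 \<le> v $ i}). poly_eval c q = 0"
      using a by blast
    show "poly_eval c p = 0" by (rule zero_closed[OF mh pc van])
  qed
  then show "p \<in> Y_V V \<inter> nonneg_inf_box F" using pb by blast
next
  fix p assume "p \<in> Y_V V \<inter> nonneg_inf_box F"
  then have pY: "p \<in> Y_V V" and pb: "p \<in> nonneg_inf_box F" by auto
  obtain w where w: "w \<in> V" "\<forall>i\<in>F. w $ i = 0" "\<forall>i. i \<notin> F \<longrightarrow> 0 < w $ i"
    using assms(2) unfolding is_acyclic_flat_def by blast
  define u where "u i = (SOME t. t \<ge> 0 \<and> p i = Fin t)" for i
  have pF: "p i = Fin (u i) \<and> u i \<ge> 0" if "i \<in> F" for i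
  proof -
    have "\<exists>t. t \<ge> 0 \<and> p i = Fin t" using pb that unfolding nonneg_inf_box_def by blast
    then have "u i \<ge> 0 \<and> p i = Fin (u i)" unfolding u_def by (rule someI_ex)
    then show ?thesis by simp
  qed
  have pI: "p i = P1.Inf" if "i \<notin> F" for i
    using pb that unfolding nonneg_inf_box_def by blast
  obtain v where v: "v \<in> V" "\<forall>i\<in>F. v $ i = u i"
    using proj_exists[OF assms(1) pY, of F u] pF by blast
  define f where "f n = embP (v + real n *\<^sub>R w)" for n :: nat
  have fi: "f n i = Fin (v $ i + real n * w $ i)" for n i
    unfolding f_def embP_def by simp
  have lim: "limitin P1E_topology f p sequentially"
    unfolding P1E_topology_def limitin_componentwise
  proof (intro conjI ballI)
    show "p \<in> extensional UNIV" by simp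
    show "\<forall>\<^sub>F a in sequentially. f a \<in> topspace (product_topology (\<lambda>_. P1_topology) UNIV)"
      by simp
    fix i :: 'e
    show "limitin P1_topology (\<lambda>c. f c i) (p i) sequentially"
    proof (cases "i \<in> F")
      case True
      then have "f n i = p i" for n using fi pF v w by simp
      then show ?thesis by simp
    next
      case False
      show ?thesis unfolding limitin_def
      proof (intro conjI allI impI)
        show "p i \<in> topspace P1_topology" by simp
        fix U assume "openin P1_topology U \<and> p i \<in> U"
        then obtain M where M: "\<forall>x. M < \<bar>x\<bar> \<longrightarrow> Fin x \<in> U"
          using pI[OF False] unfolding openin_P1 by auto
        have "eventually (\<lambda>n. v $ i + real n * w $ i > M) sequentially"
          using eventually_gt_lin w(3) False by blast
        then show "eventually (\<lambda>n. f n i \<in> U) sequentially"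
        proof (rule eventually_mono)
          fix n assume "v $ i + real n * w $ i > M"
          then have "M < \<bar>v $ i + real n * w $ i\<bar>" by linarith
          then have "Fin (v $ i + real n * w $ i) \<in> U" using M by blast
          then show "f n i \<in> U" by (simp only: fi)
        qed
      qed
    qed
  qed
  have ev0: "eventually (\<lambda>n. \<forall>i. i \<notin> F \<longrightarrow> v $ i + real n * w $ i > 0) sequentially"
  proof (rule eventually_all_finite)
    fix i
    show "eventually (\<lambda>n. i \<notin> F \<longrightarrow> v $ i + real n * w $ i > 0) sequentially"
    proof (cases "i \<in> F")
      case False
      then have "0 < w $ i" using w(3) by blast
      from eventually_gt_lin[OF this, where a="v $ i" and M=0] show ?thesis
        by (rule eventually_mono) simp
    qed simp
  qed
  have ev: "eventually (\<lambda>n. f n \<in> embP ` (V \<inter> {v. \<forall>i. 0 \<le> v $ i})) sequentially"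
    using ev0
  proof eventually_elim
    case (elim n)
    have "v + real n *\<^sub>R w \<in> V" using v w assms(1) by (simp add: subspace_add subspace_scale)
    moreover have "\<forall>i. 0 \<le> (v + real n *\<^sub>R w) $ i"
    proof
      fix i
      have eq: "(v + real n *\<^sub>R w) $ i = v $ i + real n * w $ i" by simp
      show "0 \<le> (v + real n *\<^sub>R w) $ i"
      proof (cases "i \<in> F")
        case True
        then have "v $ i = u i" "w $ i = 0" "u i \<ge> 0" using v w pF by auto
        then show ?thesis unfolding eq by simp
      next
        case False
        then have "v $ i + real n * w $ i > 0" using elim by blast
        then show ?thesis unfolding eq by linarith
      qed
    qed
    ultimately show ?case unfolding f_def by blast
  qed
  have "p \<in> calY_V V"
    unfolding calY_V_def in_closure_of
  proof (intro conjI allI impI)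
    show "p \<in> topspace P1E_topology" by simp
    fix T assume TT: "p \<in> T \<and> openin P1E_topology T"
    then have Tp: "openin P1E_topology T" "p \<in> T" by auto
    have e1: "eventually (\<lambda>n. f n \<in> T) sequentially" by (rule limitinD[OF lim Tp])
    have "eventually (\<lambda>n. f n \<in> T \<and> f n \<in> embP ` (V \<inter> {v. \<forall>i. 0 \<le> v $ i})) sequentially"
      by (rule eventually_conj[OF e1 ev])
    from this[unfolded eventually_sequentially] obtain N
      where N: "\<forall>n\<ge>N. f n \<in> T \<and> f n \<in> embP ` (V \<inter> {v. \<forall>i. 0 \<le> v $ i})" ..
    have "f N \<in> T \<and> f N \<in> embP ` (V \<inter> {v. \<forall>i. 0 \<le> v $ i})" using N by simp
    then show "\<exists>y. y \<in> embP ` (V \<inter> {v. \<forall>i. 0 \<le> v $ i}) \<and> y \<in> T" by blast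
  qed
  then show "p \<in> calY_V V \<inter> nonneg_inf_box F" using pb by blast
qed


end
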